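(* Let $E$ be a nondeterministic expression and $X$ a variable with $E\rhd X$ (i.e. $E\rhd\{X\}$). Then $E = E + X$ is derivable from the axiom system.
   Context: Fix a set $\mathsf{Act}$ of actions containing $\tau$ and a set $\mathsf{Var}$ of variables. Nondeterministic expressions: $E ::= 0 \mid X \mid \alpha.P \mid \mathrm{rec}\,X.E \mid E + E$; probabilistic expressions: $P ::= \partial(E) \mid P \oplus_p P$ ($0<p<1$); $\alpha.E$ abbreviates $\alpha.\partial(E)$. $\mathrm{rec}\,X$ binds $X$; $E[\vec F/\vec X]$ is capture-avoiding substitution. $\sum_{i\in I}E_i$ is an iterated $+$; $\bigoplus_{i\in I}p_iP_i$ (with $\sum p_i=1$) is an iterated $\oplus$ giving $P_i$ probability $p_i$, and $\bigoplus_ip_iE_i$ abbreviates $\bigoplus_ip_i\partial(E_i)$. Probabilistic unguardedness $E\rhd V$ ($V\subseteq\mathsf{Var}$, also for probabilistic expressions) is the least relation with: $X\rhd\{X\}$; $\tau.P\rhd V$ if $P\rhd V$; $\mathrm{rec}\,Y.E\rhd V\setminus\{Y\}$ if $E\rhd V$ and $V\ne\{Y\}$; $E+F\rhd V$ if $E\rhd V$; $E+F\rhd W$ if $F\rhd W$; $\partial(E)\rhd V$ if $E\rhd V$; $P\oplus_pQ\rhd V\cup W$ if $P\rhd V$ and $Q\rhd W$. Provable equality $=$ is the least relation on expressions (both categories) that is an equivalence, a congruence for all operators, allows renaming of bound variables, contains all instances of the axioms below, and is closed under rule R2: N1 $E+F=F+E$; N2 $E+(F+G)=(E+F)+G$;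 N3 $E+E=E$; N4 $E+0=E$; P1 $P\oplus_pQ=Q\oplus_{1-p}P$; P2 $P\oplus_p(Q\oplus_{q/(1-p)}R)=(P\oplus_{p/(p+q)}Q)\oplus_{p+q}R$; P3 $P\oplus_pP=P$; T1 $\alpha.(\partial(\tau.\partial(E))\oplus_pP)=\alpha.(\partial(E)\oplus_pP)$; T2 $\tau.\bigoplus_{i\in I}p_i(E_i+F)+F=\tau.\bigoplus_{i\in I}p_i(E_i+F)$; T3 $\tau.\bigoplus_{i}p_i(E_i+\alpha.P_i)+\alpha.\bigoplus_ip_iP_i=\tau.\bigoplus_ip_i(E_i+\alpha.P_i)$; T4 $\alpha.\bigoplus_ip_i(E_i+\tau.P_i)+\alpha.\bigoplus_ip_iP_i=\alpha.\bigoplus_ip_i(E_i+\tau.P_i)$; C $\alpha.P+\alpha.Q=\alpha.P+\alpha.(P\oplus_pQ)+\alpha.Q$; R1 $\mathrm{rec}\,X.E=E[\mathrm{rec}\,X.E/X]$; R2 if $F=E[F/X]$ and not $E\rhd\{X\}$, then $F=\mathrm{rec}\,X.E$; R3 $\mathrm{rec}\,X.(\tau.(\partial(X+E)\oplus_pP)+F)=\mathrm{rec}\,X.(\tau.(\partial(X+E)\oplus_pP)+\tau.P+F)$; R4 $\mathrm{rec}\,X.(X+E)=\mathrm{rec}\,X.E$; R5 $\mathrm{rec}\,X.(\tau.\partial(X)+E)=\mathrm{rec}\,X.\tau.\partial(E)$; R6 $\mathrm{rec}\,X.(\tau.\bigoplus_{i\in I}p_i(X+E_i)+F)=\mathrm{rec}\,X.(\tau.\partial(X)+\sum_{i\in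 I}E_i+F)$. *)

theory Defs
  imports Main "HOL-Library.Infinite_Typeclass"
begin

typedef prob = "{p::real. 0 < p \<and> p < 1}"
  by (rule exI[of _ "1/2"]) simp

datatype 'a act = Tau | Vis 'a

text \<open>Nondeterministic expressions E ::= 0 | X | alpha.P | rec X.E | E + E;
  probabilistic expressions P ::= partial(E) | P (+)_p P.\<close>

datatype ('a, 'v) nexp =
    Zero
  | V 'v
  | Pre "'a act" "('a, 'v) pexp"
  | Rec 'v "('a, 'v) nexp"
  | Plus "('a, 'v) nexp" "('a, 'v) nexp"
and ('a, 'v) pexp =
    Dirac "('a, 'v) nexp"
  | PPlus "('a, 'v) pexp" prob "('a, 'v) pexp"

primrec fvN :: "('a, 'v) nexp \<Rightarrow> 'v set" and fvP :: "('a, 'v) pexp \<Rightarrow> 'v set" where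
  "fvN Zero = {}"
| "fvN (V X) = {X}"
| "fvN (Pre a P) = fvP P"
| "fvN (Rec X E) = fvN E - {X}"
| "fvN (Plus E F) = fvN E \<union> fvN F"
| "fvP (Dirac E) = fvN E"
| "fvP (PPlus P p Q) = fvP P \<union> fvP Q"

text \<open>Choice of a fresh variable (exists when the variable type is infinite and S finite).\<close>
definition fresh :: "'v set \<Rightarrow> 'v" where
  "fresh S = (SOME y. y \<notin> S)"

primrec substN :: "('v \<Rightarrow> ('a, 'v) nexp) \<Rightarrow> ('a, 'v) nexp \<Rightarrow> ('a, 'v) nexp"
  and substP :: "('v \<Rightarrow> ('a, 'v) nexp) \<Rightarrow> ('a, 'v) pexp \<Rightarrow> ('a, 'v) pexp" where
  "substN \<sigma> Zero = Zero"
| "substN \<sigma> (V X) = \<sigma> X"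
| "substN \<sigma> (Pre a P) = Pre a (substP \<sigma> P)"
| "substN \<sigma> (Rec X E) =
     (let Y = fresh (\<Union>z \<in> fvN E - {X}. fvN (\<sigma> z))
      in Rec Y (substN (\<sigma>(X := V Y)) E))"
| "substN \<sigma> (Plus E F) = Plus (substN \<sigma> E) (substN \<sigma> F)"
| "substP \<sigma> (Dirac E) = Dirac (substN \<sigma> E)"
| "substP \<sigma> (PPlus P p Q) = PPlus (substP \<sigma> P) p (substP \<sigma> Q)"

definition subst1 :: "('a, 'v) nexp \<Rightarrow> 'v \<Rightarrow> ('a, 'v) nexp \<Rightarrow> ('a, 'v) nexp" where
  "subst1 E X F = substN (V(X := F)) E"

text \<open>Iterated probabilistic choice over a list of (probability, expression) pairs;
  the first argument is the remaining probability mass.\<close>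
fun pbig_aux :: "real \<Rightarrow> (real \<times> ('a, 'v) pexp) list \<Rightarrow> ('a, 'v) pexp" where
  "pbig_aux c [] = Dirac Zero"
| "pbig_aux c [(p, P)] = P"
| "pbig_aux c ((p, P) # x # xs) = PPlus P (Abs_prob (p / c)) (pbig_aux (c - p) (x # xs))"

definition pbig :: "(real \<times> ('a, 'v) pexp) list \<Rightarrow> ('a, 'v) pexp" where
  "pbig xs = pbig_aux 1 xs"

definition distr :: "real list \<Rightarrow> bool" where
  "distr ps \<longleftrightarrow> ps \<noteq> [] \<and> (\<forall>p \<in> set ps. 0 < p) \<and> sum_list ps = 1"

fun nsum :: "('a, 'v) nexp list \<Rightarrow> ('a, 'v) nexp" where
  "nsum [] = Zero"
| "nsum [E] = E"
| "nsum (E # F # Es) = Plus E (nsum (F # Es))"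

section \<open>Probabilistic unguardedness  E |> V\<close>

inductive ungN :: "('a, 'v) nexp \<Rightarrow> 'v set \<Rightarrow> bool"
  and ungP :: "('a, 'v) pexp \<Rightarrow> 'v set \<Rightarrow> bool" where
  ung_var: "ungN (V X) {X}"
| ung_tau: "ungP P W \<Longrightarrow> ungN (Pre Tau P) W"
| ung_rec: "ungN E W \<Longrightarrow> W \<noteq> {Y} \<Longrightarrow> ungN (Rec Y E) (W - {Y})"
| ung_plusL: "ungN E W \<Longrightarrow> ungN (Plus E F) W"
| ung_plusR: "ungN F W \<Longrightarrow> ungN (Plus E F) W"
| ung_dirac: "ungN E W \<Longrightarrow> ungP (Dirac E) W"
| ung_pplus: "ungP P W \<Longrightarrow> ungP Q W' \<Longrightarrow> ungP (PPlus P p Q) (W \<union> W')"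

inductive eqN :: "('a, 'v) nexp \<Rightarrow> ('a, 'v) nexp \<Rightarrow> bool"
  and eqP :: "('a, 'v) pexp \<Rightarrow> ('a, 'v) pexp \<Rightarrow> bool" where
  reflN: "eqN E E"
| symN: "eqN E F \<Longrightarrow> eqN F E"
| transN: "eqN E F \<Longrightarrow> eqN F G \<Longrightarrow> eqN E G"
| reflP: "eqP P P"
| symP: "eqP P Q \<Longrightarrow> eqP Q P"
| transP: "eqP P Q \<Longrightarrow> eqP Q R \<Longrightarrow> eqP P R"
| cong_pre: "eqP P Q \<Longrightarrow> eqN (Pre a P) (Pre a Q)"
| cong_rec: "eqN E F \<Longrightarrow> eqN (Rec X E) (Rec X F)"
| cong_plus: "eqN E E' \<Longrightarrow> eqN F F' \<Longrightarrow> eqN (Plus E F) (Plus E' F')"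
| cong_dirac: "eqN E F \<Longrightarrow> eqP (Dirac E) (Dirac F)"
| cong_pplus: "eqP P P' \<Longrightarrow> eqP Q Q' \<Longrightarrow> eqP (PPlus P p Q) (PPlus P' p Q')"
| alpha: "Y \<notin> fvN (Rec X E) \<Longrightarrow> eqN (Rec X E) (Rec Y (subst1 E X (V Y)))"
| N1: "eqN (Plus E F) (Plus F E)"
| N2: "eqN (Plus E (Plus F G)) (Plus (Plus E F) G)"
| N3: "eqN (Plus E E) E"
| N4: "eqN (Plus E Zero) E"
| P1: "eqP (PPlus P p Q) (PPlus Q (Abs_prob (1 - Rep_prob p)) P)"
| P2: "0 < p \<Longrightarrow> 0 < q \<Longrightarrow> p + q < 1 \<Longrightarrow>
       eqP (PPlus P (Abs_prob p) (PPlus Q (Abs_prob (q / (1 - p))) R))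
           (PPlus (PPlus P (Abs_prob (p / (p + q))) Q) (Abs_prob (p + q)) R)"
| P3: "eqP (PPlus P p P) P"
| T1: "eqN (Pre a (PPlus (Dirac (Pre Tau (Dirac E))) p P)) (Pre a (PPlus (Dirac E) p P))"
| T2: "distr (map fst xs) \<Longrightarrow>
       eqN (Plus (Pre Tau (pbig (map (\<lambda>(p, E). (p, Dirac (Plus E F))) xs))) F)
           (Pre Tau (pbig (map (\<lambda>(p, E). (p, Dirac (Plus E F))) xs)))"
| T3: "distr (map fst xs) \<Longrightarrow>
       eqN (Plus (Pre Tau (pbig (map (\<lambda>(p, E, P). (p, Dirac (Plus E (Pre a P)))) xs)))
                 (Pre a (pbig (map (\<lambda>(p, E, P). (p, P)) xs))))
           (Pre Tau (pbig (map (\<lambda>(p, E, P). (p, Dirac (Plus E (Pre a P)))) xs)))"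
| T4: "distr (map fst xs) \<Longrightarrow>
       eqN (Plus (Pre a (pbig (map (\<lambda>(p, E, P). (p, Dirac (Plus E (Pre Tau P)))) xs)))
                 (Pre a (pbig (map (\<lambda>(p, E, P). (p, P)) xs))))
           (Pre a (pbig (map (\<lambda>(p, E, P). (p, Dirac (Plus E (Pre Tau P)))) xs)))"
| C: "eqN (Plus (Pre a P) (Pre a Q))
          (Plus (Plus (Pre a P) (Pre a (PPlus P p Q))) (Pre a Q))"
| R1: "eqN (Rec X E) (subst1 E X (Rec X E))"
| R2: "eqN F (subst1 E X F) \<Longrightarrow> \<not> ungN E {X} \<Longrightarrow> eqN F (Rec X E)"
| R3: "eqN (Rec X (Plus (Pre Tau (PPlus (Dirac (Plus (V X) E)) p P)) F))
           (Rec X (Plus (Plus (Pre Tau (PPlus (Dirac (Plus (V X) E)) p P)) (Pre Tau P)) F))"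
| R4: "eqN (Rec X (Plus (V X) E)) (Rec X E)"
| R5: "eqN (Rec X (Plus (Pre Tau (Dirac (V X))) E)) (Rec X (Pre Tau (Dirac E)))"
| R6: "distr (map fst xs) \<Longrightarrow>
       eqN (Rec X (Plus (Pre Tau (pbig (map (\<lambda>(p, E). (p, Dirac (Plus (V X) E))) xs))) F))
           (Rec X (Plus (Plus (Pre Tau (Dirac (V X))) (nsum (map snd xs))) F))"

end

theory Submission
  imports Defs
begin


declare transN[trans] transP[trans]

definition pb :: "(real \<times> ('a,'v) pexp) list \<Rightarrow> ('a,'v) pexp" where
  "pb l = pbig_aux (sum_list (map fst l)) l"

definition wfl :: "(real \<times> 'b) list \<Rightarrow> bool" where
  "wfl l \<longleftrightarrow> l \<noteq> [] \<and> (\<forall>x\<in>set l. 0 < fst x)"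

lemma sum_pos: "wfl l \<Longrightarrow> 0 < sum_list (map fst l)"
proof (induction l)
  case Nil then show ?case by (simp add: wfl_def)
next
  case (Cons a l)
  show ?case
  proof (cases "l = []")
    case True then show ?thesis using Cons.prems by (simp add: wfl_def)
  next
    case False
    then have "wfl l" using Cons.prems by (simp add: wfl_def)
    then show ?thesis using Cons by (simp add: wfl_def add_pos_pos)
  qed
qed

lemma pbig_aux_scale:
  "0 < k \<Longrightarrow> pbig_aux (k*c) (map (\<lambda>(p,P). (k*p,P)) l) = pbig_aux c l"
proof (induction c l rule: pbig_aux.induct)
  case (3 c p P x xs)
  have e: "k*c - k*p = k*(c-p)" by (simp add: right_diff_distrib)
  have "map (\<lambda>(p,P). (k*p,P)) (x#xs) = (k * fst x, snd x) # map (\<lambda>(p,P). (k*p,P)) xs"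
    by (cases x) auto
  then show ?case using 3 e by (cases x) (simp add: mult_divide_mult_cancel_left)
qed auto

lemma sum_scale: "sum_list (map fst (map (\<lambda>(p,P). ((k::real)*p,P)) l)) = k * sum_list (map fst l)"
  by (induction l) (auto simp: distrib_left)

lemma pb_scale: "0 < k \<Longrightarrow> pb (map (\<lambda>(p,P). (k*p,P)) l) = pb l"
  unfolding pb_def sum_scale by (rule pbig_aux_scale)

lemma pbig_aux_cons: "l \<noteq> [] \<Longrightarrow> pbig_aux c ((p,P) # l) = PPlus P (Abs_prob (p/c)) (pbig_aux (c-p) l)"
  by (cases l) auto

lemma pb_cons: "l \<noteq> [] \<Longrightarrow> pb ((p,P)#l) = PPlus P (Abs_prob (p/(p + sum_list (map fst l)))) (pb l)"
  by (simp add: pb_def pbig_aux_cons)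

lemma pb_single[simp]: "pb [(p,P)] = P"
  by (simp add: pb_def)

lemma Rep_Abs: "0 < x \<Longrightarrow> x < 1 \<Longrightarrow> Rep_prob (Abs_prob x) = x"
  by (simp add: Abs_prob_inverse)

lemma wfl_append: "wfl xs \<Longrightarrow> wfl ys \<Longrightarrow> wfl (xs @ ys)"
  by (auto simp: wfl_def)

lemma pb_append:
  assumes "wfl xs" "wfl ys"
  shows "eqP (pb (xs@ys)) (PPlus (pb xs) (Abs_prob (sum_list (map fst xs) / (sum_list (map fst xs) + sum_list (map fst ys)))) (pb ys))"
  using assms(1)
proof (induction xs)
  case Nil then show ?case by (simp add: wfl_def)
next
  case (Cons a xs)
  obtain p P where a: "a = (p,P)" by (cases a)
  have ys: "ys \<noteq> []" using assms(2) by (simp add: wfl_def)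
  have pp: "0 < p" using Cons.prems a by (simp add: wfl_def)
  have sy: "0 < sum_list (map fst ys)" using assms(2) by (rule sum_pos)
  show ?case
  proof (cases "xs = []")
    case True
    then show ?thesis using a ys by (simp add: pb_cons reflP)
  next
    case False
    have wx: "wfl xs" using Cons.prems False by (simp add: wfl_def)
    define sx where "sx = sum_list (map fst xs)"
    define s where "s = sum_list (map fst ys)"
    have sxp: "0 < sx" using wx sx_def sum_pos by blast
    have sp: "0 < s" using sy s_def by simp
    have IH: "eqP (pb (xs@ys)) (PPlus (pb xs) (Abs_prob (sx / (sx + s))) (pb ys))"
      using Cons.IH wx sx_def s_def by simp
    define p0 where "p0 = p / (p + sx + s)"
    define q0 where "q0 = sx / (p + sx + s)"
    have om: "1 - p0 = (sx + s) / (p + sx + s)" using pp sxp sp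
      by (simp add: p0_def field_simps)
    have nz: "p + sx + s \<noteq> 0" "sx + s \<noteq> 0" using pp sxp sp by auto
    have h1: "q0 / (1 - p0) = sx / (sx + s)" unfolding om q0_def using nz
      by simp
    have h3: "p0 + q0 = (p + sx) / (p + sx + s)"
      by (simp add: p0_def q0_def add_divide_distrib)
    have nz2: "p + sx \<noteq> 0" using pp sxp by auto
    have h2: "p0 / (p0 + q0) = p / (p + sx)"
      by (subst h3) (simp add: p0_def nz nz2)
    have c0: "0 < p0" "0 < q0" using pp sxp sp
      by (auto simp: p0_def q0_def)
    have c1: "p0 + q0 < 1" unfolding h3 using pp sxp sp by simp
    note c0 = c0 c1
    have e1: "pb (a#xs) = PPlus P (Abs_prob (p/(p+sx))) (pb xs)" using a False by (simp add: pb_cons sx_def)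
    have e2: "sum_list (map fst (a#xs)) = p + sx" by (simp add: a sx_def)
    have "pb (a # xs @ ys) = PPlus P (Abs_prob p0) (pb (xs@ys))"
      using a False by (simp add: pb_cons p0_def sx_def s_def add.assoc)
    also have "eqP \<dots> (PPlus P (Abs_prob p0) (PPlus (pb xs) (Abs_prob (q0 / (1 - p0))) (pb ys)))"
      using IH h1 by (simp add: cong_pplus reflP)
    also have "eqP \<dots> (PPlus (PPlus P (Abs_prob (p0/(p0+q0))) (pb xs)) (Abs_prob (p0+q0)) (pb ys))"
      using c0 by (rule P2)
    also have "\<dots> = PPlus (pb (a#xs)) (Abs_prob (sum_list (map fst (a#xs)) / (sum_list (map fst (a#xs)) + sum_list (map fst ys)))) (pb ys)"
      unfolding h2 unfolding h3 e1 e2 s_def[symmetric] by (rule refl)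
    finally show ?thesis by simp
  qed
qed

definition scl :: "real \<Rightarrow> (real \<times> 'b) list \<Rightarrow> (real \<times> 'b) list" where
  "scl k l = map (\<lambda>(p,P). (k*p,P)) l"

lemma sum_scl: "sum_list (map fst (scl k l)) = k * sum_list (map fst l)"
  unfolding scl_def by (rule sum_scale)

lemma pb_scl: "0 < k \<Longrightarrow> pb (scl k l) = pb l"
  unfolding scl_def by (rule pb_scale)

lemma wfl_scl: "0 < k \<Longrightarrow> wfl l \<Longrightarrow> wfl (scl k l)"
  by (auto simp: wfl_def scl_def)

lemma set_scl: "(a,b) \<in> set (scl k l) \<Longrightarrow> \<exists>p. a = k*p \<and> (p,b) \<in> set l"
  by (auto simp: scl_def)

lemma pb_swap:
  assumes "wfl xs" "wfl ys"
  shows "eqP (pb (xs@ys)) (pb (ys@xs))"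
proof -
  define sx where "sx = sum_list (map fst xs)"
  define sy where "sy = sum_list (map fst ys)"
  have p: "0 < sx" "0 < sy" using assms sum_pos sx_def sy_def by blast+
  have r: "1 - Rep_prob (Abs_prob (sx / (sx + sy))) = sy / (sy + sx)"
    using p by (subst Rep_Abs) (auto simp: field_simps)
  have "eqP (pb (xs@ys)) (PPlus (pb xs) (Abs_prob (sx / (sx + sy))) (pb ys))"
    using pb_append[OF assms] sx_def sy_def by simp
  also have "eqP \<dots> (PPlus (pb ys) (Abs_prob (sy / (sy + sx))) (pb xs))"
    using P1 r by metis
  also have "eqP \<dots> (pb (ys@xs))"
    using pb_append[OF assms(2,1)] sx_def sy_def by (simp add: symP)
  finally show ?thesis .
qed

lemma pb_move:
  assumes "wfl (xs @ x # ys)"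
  shows "eqP (pb (xs @ x # ys)) (pb (x # xs @ ys))"
proof (cases "xs = []")
  case True then show ?thesis by (simp add: reflP)
next
  case xne: False
  have wx: "wfl xs" "wfl [x]" using assms xne by (auto simp: wfl_def)
  show ?thesis
  proof (cases "ys = []")
    case True
    then show ?thesis using pb_swap[OF wx] by simp
  next
    case False
    have wy: "wfl ys" using assms False by (auto simp: wfl_def)
    have w1: "wfl (xs @ [x])" "wfl ([x] @ xs)" using wx by (auto simp: wfl_def)
    have s: "sum_list (map fst (xs @ [x])) = sum_list (map fst ([x] @ xs))" by simp
    have "pb (xs @ x # ys) = pb ((xs @ [x]) @ ys)" by simp
    also have "eqP \<dots> (PPlus (pb (xs @ [x])) (Abs_prob (sum_list (map fst (xs @ [x])) / (sum_list (map fst (xs @ [x])) + sum_list (map fst ys)))) (pb ys))"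
      by (rule pb_append[OF w1(1) wy])
    also have "eqP \<dots> (PPlus (pb ([x] @ xs)) (Abs_prob (sum_list (map fst ([x] @ xs)) / (sum_list (map fst ([x] @ xs)) + sum_list (map fst ys)))) (pb ys))"
      unfolding s by (rule cong_pplus[OF pb_swap[OF wx] reflP])
    also have "eqP \<dots> (pb (([x] @ xs) @ ys))"
      by (rule symP[OF pb_append[OF w1(2) wy]])
    finally show ?thesis by simp
  qed
qed

lemma pbig_aux_cong:
  "(\<forall>y\<in>set l. eqP (f y) (g y)) \<Longrightarrow>
   eqP (pbig_aux c (map (\<lambda>y. (w y, f y)) l)) (pbig_aux c (map (\<lambda>y. (w y, g y)) l))"
proof (induction l arbitrary: c)
  case Nil then show ?case by (simp add: reflP)
next
  case (Cons a l)
  show ?case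
  proof (cases "l = []")
    case True then show ?thesis using Cons.prems by simp
  next
    case False
    then show ?thesis using Cons by (simp add: pbig_aux_cons cong_pplus)
  qed
qed

lemma pb_cong:
  "(\<forall>y\<in>set l. eqP (f y) (g y)) \<Longrightarrow>
   eqP (pb (map (\<lambda>y. (w y, f y)) l)) (pb (map (\<lambda>y. (w y, g y)) l))"
  unfolding pb_def by (simp add: o_def pbig_aux_cong[simplified])

lemma sum_concat_scl:
  assumes "\<forall>k\<in>set K. 0 < sum_list (map fst (Lf k))"
  shows "sum_list (map fst (concat (map (\<lambda>k. scl (w k / sum_list (map fst (Lf k))) (Lf k)) K))) = sum_list (map w K)"
  using assms by (induction K) (auto simp: sum_scl)

lemma pb_flatten:
  assumes "K \<noteq> []" "\<forall>k\<in>set K. 0 < w k \<and> wfl (Lf k)"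
  shows "eqP (pb (map (\<lambda>k. (w k, pb (Lf k))) K))
             (pb (concat (map (\<lambda>k. scl (w k / sum_list (map fst (Lf k))) (Lf k)) K)))"
  using assms
proof (induction K)
  case Nil then show ?case by simp
next
  case (Cons k K)
  have wk: "0 < w k" "wfl (Lf k)" using Cons.prems by auto
  have sk: "0 < sum_list (map fst (Lf k))" using wk sum_pos by blast
  show ?case
  proof (cases "K = []")
    case True
    then show ?thesis using wk sk by (simp add: pb_scl reflP)
  next
    case False
    let ?S = "scl (w k / sum_list (map fst (Lf k))) (Lf k)"
    let ?R = "concat (map (\<lambda>k. scl (w k / sum_list (map fst (Lf k))) (Lf k)) K)"
    have allp: "\<forall>k\<in>set K. 0 < sum_list (map fst (Lf k))" using Cons.prems sum_pos by auto
    have sR: "sum_list (map fst ?R) = sum_list (map w K)" using sum_concat_scl[OF allp] .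
    have sS: "sum_list (map fst ?S) = w k" using sk by (simp add: sum_scl)
    have wS: "wfl ?S" using wk sk by (simp add: wfl_scl)
    have wR: "wfl ?R"
    proof -
      obtain k' K' where K: "K = k' # K'" using False by (cases K) auto
      have "wfl (Lf k')" "0 < w k'" using Cons.prems K by auto
      then have "wfl (scl (w k' / sum_list (map fst (Lf k'))) (Lf k'))"
        by (intro wfl_scl divide_pos_pos sum_pos)
      moreover have "\<forall>x\<in>set ?R. 0 < fst x"
        using Cons.prems by (force simp: scl_def wfl_def intro!: mult_pos_pos divide_pos_pos sum_pos)
      ultimately show ?thesis by (auto simp: wfl_def K)
    qed
    have IH: "eqP (pb (map (\<lambda>k. (w k, pb (Lf k))) K)) (pb ?R)" using Cons False by simp
    have "pb (map (\<lambda>k. (w k, pb (Lf k))) (k # K)) = PPlus (pb (Lf k)) (Abs_prob (w k / (w k + sum_list (map w K)))) (pb (map (\<lambda>k. (w k, pb (Lf k))) K))"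
      using False by (simp add: pb_cons o_def)
    also have "eqP \<dots> (PPlus (pb ?S) (Abs_prob (sum_list (map fst ?S) / (sum_list (map fst ?S) + sum_list (map fst ?R)))) (pb ?R))"
      unfolding sS sR pb_scl[OF divide_pos_pos[OF wk(1) sk]] by (rule cong_pplus[OF reflP IH])
    also have "eqP \<dots> (pb (?S @ ?R))" by (rule symP[OF pb_append[OF wS wR]])
    finally show ?thesis by simp
  qed
qed



definition lf :: "real \<times> 'v \<times> ('a,'v) nexp \<Rightarrow> real \<times> ('a,'v) pexp" where
  "lf = (\<lambda>(q,Z,E). (q, Dirac (Plus (V Z) E)))"

lemma lf_simp[simp]: "lf (q,Z,E) = (q, Dirac (Plus (V Z) E))" by (simp add: lf_def)

lemma map_lf_scl: "map lf (scl k L) = scl k (map lf L)"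
  by (induction L) (auto simp: scl_def lf_def)

lemma fst_lf[simp]: "fst (lf x) = fst x" by (cases x) (auto simp: lf_def)

lemma fst_o_lf[simp]: "fst \<circ> lf = fst" by (rule ext) simp

lemma wfl_map_lf: "wfl (map lf L) = wfl L" by (auto simp: wfl_def)

lemma sum_map_lf[simp]: "sum_list (map fst (map lf L)) = sum_list (map fst L)"
  by (induction L) auto

lemma swap_left: "eqN (Plus (Plus a b) c) (Plus b (Plus a c))"
proof -
  have "eqN (Plus (Plus a b) c) (Plus (Plus b a) c)" by (rule cong_plus[OF N1 reflN])
  also have "eqN \<dots> (Plus b (Plus a c))" by (rule symN[OF N2])
  finally show ?thesis .
qed

lemma lrot: "eqN (Plus a (Plus b c)) (Plus b (Plus a c))"
  using transN[OF N2 swap_left] .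

lemma absorb_plusR: "eqN E (Plus E T) \<Longrightarrow> eqN (Plus E F) (Plus (Plus E F) T)"
proof -
  assume h: "eqN E (Plus E T)"
  have "eqN (Plus E F) (Plus (Plus E T) F)" by (rule cong_plus[OF h reflN])
  also have "eqN \<dots> (Plus E (Plus T F))" by (rule symN[OF N2])
  also have "eqN \<dots> (Plus E (Plus F T))" by (rule cong_plus[OF reflN N1])
  also have "eqN \<dots> (Plus (Plus E F) T)" by (rule N2)
  finally show ?thesis .
qed

lemma absorb_plusL: "eqN E (Plus E T) \<Longrightarrow> eqN (Plus F E) (Plus (Plus F E) T)"
proof -
  assume h: "eqN E (Plus E T)"
  have "eqN (Plus F E) (Plus E F)" by (rule N1)
  also have "eqN \<dots> (Plus (Plus E F) T)" by (rule absorb_plusR[OF h])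
  also have "eqN \<dots> (Plus (Plus F E) T)" by (rule cong_plus[OF N1 reflN])
  finally show ?thesis .
qed

lemma absorb_trans: "eqN E (Plus E T) \<Longrightarrow> eqN (Plus T X) T \<Longrightarrow> eqN E (Plus E X)"
proof -
  assume h: "eqN E (Plus E T)" and t: "eqN (Plus T X) T"
  have "eqN E (Plus E T)" by (rule h)
  also have "eqN \<dots> (Plus E (Plus T X))" by (rule cong_plus[OF reflN symN[OF t]])
  also have "eqN \<dots> (Plus (Plus E T) X)" by (rule N2)
  also have "eqN \<dots> (Plus E X)" by (rule cong_plus[OF symN[OF h] reflN])
  finally show ?thesis .
qed

lemma absorb_sum: "eqN G (Plus S T) \<Longrightarrow> eqN G (Plus G T)"
proof -
  assume h: "eqN G (Plus S T)"
  have "eqN G (Plus S T)" by (rule h)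
  also have "eqN \<dots> (Plus S (Plus T T))" by (rule cong_plus[OF reflN symN[OF N3]])
  also have "eqN \<dots> (Plus (Plus S T) T)" by (rule N2)
  also have "eqN \<dots> (Plus G T)" by (rule cong_plus[OF symN[OF h] reflN])
  finally show ?thesis .
qed

lemma absorb_cong: "eqN E E' \<Longrightarrow> eqN E (Plus E T) \<Longrightarrow> eqN E' (Plus E' T)"
  by (meson cong_plus reflN symN transN)

lemma pre_dirac_tau: "eqN (Pre a (Dirac E)) (Pre a (Dirac (Pre Tau (Dirac E))))"
proof -
  define h where "h = Abs_prob (1/2)"
  have "eqP (Dirac E) (PPlus (Dirac E) h (Dirac E))" by (rule symP[OF P3])
  then have "eqN (Pre a (Dirac E)) (Pre a (PPlus (Dirac E) h (Dirac E)))" by (rule cong_pre)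
  also have "eqN \<dots> (Pre a (PPlus (Dirac (Pre Tau (Dirac E))) h (Dirac E)))" by (rule symN[OF T1])
  also have "eqN \<dots> (Pre a (PPlus (Dirac E) (Abs_prob (1 - Rep_prob h)) (Dirac (Pre Tau (Dirac E)))))"
    by (rule cong_pre[OF P1])
  also have "eqN \<dots> (Pre a (PPlus (Dirac (Pre Tau (Dirac E))) (Abs_prob (1 - Rep_prob h)) (Dirac (Pre Tau (Dirac E)))))"
    by (rule symN[OF T1])
  also have "eqN \<dots> (Pre a (Dirac (Pre Tau (Dirac E))))" by (rule cong_pre[OF P3])
  finally show ?thesis .
qed

lemma leaf_tau_front:
  assumes "wfl ((p, Dirac E) # R)"
  shows "eqN (Pre a (pb ((p, Dirac E) # R))) (Pre a (pb ((p, Dirac (Pre Tau (Dirac E))) # R)))"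
proof (cases "R = []")
  case True then show ?thesis by (simp add: pre_dirac_tau)
next
  case False
  then show ?thesis by (simp add: pb_cons symN[OF T1])
qed

lemma leaf_tau_one:
  assumes "wfl (xs @ (p, Dirac E) # ys)"
  shows "eqN (Pre a (pb (xs @ (p, Dirac E) # ys))) (Pre a (pb (xs @ (p, Dirac (Pre Tau (Dirac E))) # ys)))"
proof -
  have w2: "wfl (xs @ (p, Dirac (Pre Tau (Dirac E))) # ys)" using assms by (auto simp: wfl_def)
  have w3: "wfl ((p, Dirac E) # xs @ ys)" using assms by (auto simp: wfl_def)
  have "eqN (Pre a (pb (xs @ (p, Dirac E) # ys))) (Pre a (pb ((p, Dirac E) # xs @ ys)))"
    by (rule cong_pre[OF pb_move[OF assms]])
  also have "eqN \<dots> (Pre a (pb ((p, Dirac (Pre Tau (Dirac E))) # xs @ ys)))"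
    by (rule leaf_tau_front[OF w3])
  also have "eqN \<dots> (Pre a (pb (xs @ (p, Dirac (Pre Tau (Dirac E))) # ys)))"
    by (rule cong_pre[OF symP[OF pb_move[OF w2]]])
  finally show ?thesis .
qed

lemma leaf_tau:
  "wfl l \<Longrightarrow> eqN (Pre a (pb (map (\<lambda>(p,E,b). (p, Dirac E)) l)))
        (Pre a (pb (map (\<lambda>(p,E,b). (p, Dirac (if b then Pre Tau (Dirac E) else E))) l)))"
proof (induction "length (filter (\<lambda>(p,E,b). b) l)" arbitrary: l rule: less_induct)
  case less
  show ?case
  proof (cases "\<exists>x\<in>set l. snd (snd x)")
    case False
    then have "map (\<lambda>(p,E,b). (p, Dirac E)) l = map (\<lambda>(p,E,b). (p, Dirac (if b then Pre Tau (Dirac E) else E))) l"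
      by (auto intro!: map_cong)
    then show ?thesis by (metis reflN)
  next
    case True
    then obtain x where x: "x \<in> set l" "snd (snd x)" by blast
    obtain xs ys where l: "l = xs @ x # ys" using split_list[OF x(1)] by blast
    obtain p E where xe: "x = (p, E, True)" using x(2) by (cases x) auto
    define l' where "l' = xs @ (p, Pre Tau (Dirac E), False) # ys"
    have wl': "wfl l'" using less.prems l xe by (auto simp: wfl_def l'_def)
    have lt: "length (filter (\<lambda>(p,E,b). b) l') < length (filter (\<lambda>(p,E,b). b) l)"
      by (simp add: l'_def l xe)
    have IH: "eqN (Pre a (pb (map (\<lambda>(p,E,b). (p, Dirac E)) l')))
        (Pre a (pb (map (\<lambda>(p,E,b). (p, Dirac (if b then Pre Tau (Dirac E) else E))) l')))"
      using less.hyps[OF lt wl'] .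
    have w0: "wfl (map (\<lambda>(p,E,b). (p, Dirac E)) xs @ (p, Dirac E) # map (\<lambda>(p,E,b). (p, Dirac E)) ys)"
      using less.prems l xe by (force simp: wfl_def)
    have "eqN (Pre a (pb (map (\<lambda>(p,E,b). (p, Dirac E)) l))) (Pre a (pb (map (\<lambda>(p,E,b). (p, Dirac E)) l')))"
      using leaf_tau_one[OF w0] by (simp add: l xe l'_def)
    also note IH
    also have "map (\<lambda>(p,E,b). (p, Dirac (if b then Pre Tau (Dirac E) else E))) l'
             = map (\<lambda>(p,E,b). (p, Dirac (if b then Pre Tau (Dirac E) else E))) l"
      by (simp add: l xe l'_def)
    finally show ?thesis .
  qed
qed

lemma substP_pbig_aux: "substP \<sigma> (pbig_aux c l) = pbig_aux c (map (\<lambda>(p,P). (p, substP \<sigma> P)) l)"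
  by (induction c l rule: pbig_aux.induct) auto

lemma substP_pb: "substP \<sigma> (pb l) = pb (map (\<lambda>(p,P). (p, substP \<sigma> P)) l)"
proof -
  have "sum_list (map fst (map (\<lambda>(p,P). (p, substP \<sigma> P)) l)) = sum_list (map fst l)"
    by (induction l) auto
  then show ?thesis by (simp add: pb_def substP_pbig_aux)
qed

lemma substP_leaves:
  assumes "\<forall>(q,Z,E)\<in>set L. Z \<noteq> Y"
  shows "substP (V(Y := G)) (pb (map lf L)) = pb (map lf (map (\<lambda>(q,Z,E). (q, Z, substN (V(Y := G)) E)) L))"
proof -
  have "map (\<lambda>(p,P). (p, substP (V(Y := G)) P)) (map lf L) = map lf (map (\<lambda>(q,Z,E). (q, Z, substN (V(Y := G)) E)) L)"
    using assms by (induction L) auto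
  then show ?thesis by (simp only: substP_pb)
qed

lemma pbig_pb:
  assumes "wfl l"
  shows "pbig (map (\<lambda>(p,P). ((1 / sum_list (map fst l)) * p, P)) l) = pb l"
proof -
  have s: "0 < sum_list (map fst l)" using assms by (rule sum_pos)
  have "pbig_aux ((1 / sum_list (map fst l)) * sum_list (map fst l)) (map (\<lambda>(p,P). ((1 / sum_list (map fst l)) * p, P)) l) = pb l"
    unfolding pb_def by (rule pbig_aux_scale) (use s in simp)
  then show ?thesis using s by (simp add: pbig_def)
qed



lemma r3_iter:
  "wfl L \<Longrightarrow> \<exists>x\<in>set L. fst (snd x) \<noteq> Y \<Longrightarrow>
   eqN (Rec Y (Plus (Pre Tau (pb (map lf L))) F))
       (Rec Y (Plus (Plus (Pre Tau (pb (map lf L))) (Pre Tau (pb (map lf (filter (\<lambda>x. fst (snd x) \<noteq> Y) L))))) F))"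
proof (induction "length (filter (\<lambda>x. fst (snd x) = Y) L)" arbitrary: L F rule: less_induct)
  case less
  let ?P = "\<lambda>x. fst (snd x) \<noteq> Y"
  show ?case
  proof (cases "\<exists>x\<in>set L. fst (snd x) = Y")
    case False
    then have "filter ?P L = L" by (auto intro: filter_True)
    then show ?thesis by (simp add: cong_rec cong_plus symN[OF N3] reflN)
  next
    case True
    then obtain x where x: "x \<in> set L" "fst (snd x) = Y" by blast
    obtain xs ys where l: "L = xs @ x # ys" using split_list[OF x(1)] by blast
    obtain q E where xe: "x = (q, Y, E)" using x(2) by (cases x) auto
    define R where "R = xs @ ys"
    have Rne: "R \<noteq> []" using less.prems(2) l x(2) R_def by auto
    have wR: "wfl R" using less.prems(1) Rne l R_def by (auto simp: wfl_def)
    have ex: "\<exists>x\<in>set R. fst (snd x) \<noteq> Y" using less.prems(2) l x(2) R_def by auto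
    have lt: "length (filter (\<lambda>x. fst (snd x) = Y) R) < length (filter (\<lambda>x. fst (snd x) = Y) L)"
      using l xe R_def by simp
    have fe: "filter ?P L = filter ?P R" using l xe R_def by simp
    define A where "A = Pre Tau (pb (map lf L))"
    define A' where "A' = Pre Tau (PPlus (Dirac (Plus (V Y) E)) (Abs_prob (q / (q + sum_list (map fst R)))) (pb (map lf R)))"
    define B where "B = Pre Tau (pb (map lf R))"
    define Q where "Q = Pre Tau (pb (map lf (filter ?P L)))"
    have wm: "wfl (map lf xs @ lf x # map lf ys)" using less.prems(1) l by (simp add: wfl_map_lf[symmetric])
    have "eqP (pb (map lf L)) (pb (lf x # map lf xs @ map lf ys))"
      using pb_move[OF wm] l by simp
    also have "pb (lf x # map lf xs @ map lf ys) = PPlus (Dirac (Plus (V Y) E)) (Abs_prob (q / (q + sum_list (map fst R)))) (pb (map lf R))"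
      using Rne xe R_def by (simp add: pb_cons)
    finally have AA: "eqN A A'" unfolding A_def A'_def by (rule cong_pre)
    have IH: "eqN (Rec Y (Plus B (Plus A' F))) (Rec Y (Plus (Plus B Q) (Plus A' F)))"
      using less.hyps[OF lt wR ex, of "Plus A' F"] unfolding B_def Q_def fe .
    have "eqN (Rec Y (Plus A F)) (Rec Y (Plus A' F))" by (rule cong_rec[OF cong_plus[OF AA reflN]])
    also have "eqN \<dots> (Rec Y (Plus (Plus A' B) F))" unfolding A'_def B_def by (rule R3)
    also have "eqN \<dots> (Rec Y (Plus B (Plus A' F)))" by (rule cong_rec[OF swap_left])
    also note IH
    also have "eqN (Rec Y (Plus (Plus B Q) (Plus A' F))) (Rec Y (Plus B (Plus Q (Plus A' F))))"
      by (rule cong_rec[OF symN[OF N2]])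
    finally have c: "eqN (Rec Y (Plus A F)) (Rec Y (Plus B (Plus Q (Plus A' F))))" .
    have "eqN (Rec Y (Plus (Plus A Q) F)) (Rec Y (Plus A' (Plus Q F)))"
      by (rule cong_rec[OF transN[OF symN[OF N2] cong_plus[OF AA reflN]]])
    also have "eqN \<dots> (Rec Y (Plus (Plus A' B) (Plus Q F)))" unfolding A'_def B_def by (rule R3)
    also have "eqN \<dots> (Rec Y (Plus B (Plus A' (Plus Q F))))" by (rule cong_rec[OF swap_left])
    also have "eqN \<dots> (Rec Y (Plus B (Plus Q (Plus A' F))))" by (rule cong_rec[OF cong_plus[OF reflN lrot]])
    finally have d: "eqN (Rec Y (Plus (Plus A Q) F)) (Rec Y (Plus B (Plus Q (Plus A' F))))" .
    show ?thesis using transN[OF c symN[OF d]] unfolding A_def Q_def .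
  qed
qed



definition Zs :: "(real \<times> 'v \<times> ('a,'v) nexp) list \<Rightarrow> 'v set" where
  "Zs L = (\<lambda>x. fst (snd x)) ` set L"

definition NC :: "('a,'v) nexp \<Rightarrow> 'v set \<Rightarrow> bool" where
  "NC E W \<longleftrightarrow> (\<exists>Z. W = {Z} \<and> eqN E (Plus E (V Z))) \<or>
     (\<exists>L. wfl L \<and> Zs L = W \<and> eqN E (Plus E (Pre Tau (pb (map lf L)))))"

definition NPC :: "('a,'v) pexp \<Rightarrow> 'v set \<Rightarrow> bool" where
  "NPC P W \<longleftrightarrow> (\<exists>M. wfl M \<and> (\<forall>x\<in>set M. NC (fst (snd x)) (snd (snd x))) \<and>
     (\<Union>x\<in>set M. snd (snd x)) = W \<and> eqP P (pb (map (\<lambda>x. (fst x, Dirac (fst (snd x)))) M)))"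

lemma nc_var: "NC (V X) {X}"
  unfolding NC_def using symN[OF N3] by blast

lemma nc_plusL: "NC E W \<Longrightarrow> NC (Plus E F) W"
  unfolding NC_def using absorb_plusR by blast

lemma nc_plusR: "NC E W \<Longrightarrow> NC (Plus F E) W"
  unfolding NC_def using absorb_plusL by blast

lemma npc_dirac: "NC E W \<Longrightarrow> NPC (Dirac E) W"
  unfolding NPC_def
  by (rule exI[of _ "[(1, E, W)]"]) (simp add: wfl_def reflP)

lemma npc_pplus:
  assumes "NPC P W" "NPC Q W'"
  shows "NPC (PPlus P p Q) (W \<union> W')"
proof -
  obtain M1 where M1: "wfl M1" "\<forall>x\<in>set M1. NC (fst (snd x)) (snd (snd x))"
    "(\<Union>x\<in>set M1. snd (snd x)) = W" "eqP P (pb (map (\<lambda>x. (fst x, Dirac (fst (snd x)))) M1))"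
    using assms(1) unfolding NPC_def by blast
  obtain M2 where M2: "wfl M2" "\<forall>x\<in>set M2. NC (fst (snd x)) (snd (snd x))"
    "(\<Union>x\<in>set M2. snd (snd x)) = W'" "eqP Q (pb (map (\<lambda>x. (fst x, Dirac (fst (snd x)))) M2))"
    using assms(2) unfolding NPC_def by blast
  define r where "r = Rep_prob p"
  have r: "0 < r" "r < 1" using Rep_prob[of p] r_def by auto
  define s1 where "s1 = sum_list (map fst M1)"
  define s2 where "s2 = sum_list (map fst M2)"
  have s: "0 < s1" "0 < s2" using M1(1) M2(1) sum_pos s1_def s2_def by blast+
  define k1 where "k1 = r / s1"
  define k2 where "k2 = (1 - r) / s2"
  have k: "0 < k1" "0 < k2" using r s k1_def k2_def by auto
  let ?g = "\<lambda>x. (fst x, Dirac (fst (snd x)))"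
  define M where "M = scl k1 M1 @ scl k2 M2"
  have gs: "\<And>k M. map ?g (scl k M) = scl k (map ?g M)" by (auto simp: scl_def)
  have w0: "wfl (map ?g M1)" "wfl (map ?g M2)" using M1(1) M2(1) by (auto simp: wfl_def)
  have w1: "wfl (scl k1 (map ?g M1))" "wfl (scl k2 (map ?g M2))"
    using wfl_scl[OF k(1) w0(1)] wfl_scl[OF k(2) w0(2)] .
  have sg: "\<And>M. sum_list (map fst (map ?g M)) = sum_list (map fst M)" by (simp add: o_def)
  have e1: "sum_list (map fst (scl k1 (map ?g M1))) = r"
    unfolding sum_scl sg k1_def s1_def using s(1) s1_def by simp
  have e2: "sum_list (map fst (scl k2 (map ?g M2))) = 1 - r"
    unfolding sum_scl sg k2_def s2_def using s(2) s2_def by simp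
  have "eqP (pb (map ?g M)) (PPlus (pb (scl k1 (map ?g M1))) (Abs_prob (r / (r + (1 - r)))) (pb (scl k2 (map ?g M2))))"
    using pb_append[OF w1] unfolding M_def e1 e2 by (simp add: gs)
  also have "\<dots> = PPlus (pb (map ?g M1)) p (pb (map ?g M2))"
    using k by (simp add: pb_scl r_def Rep_prob_inverse)
  finally have eM: "eqP (PPlus P p Q) (pb (map ?g M))"
    by (rule transP[OF cong_pplus[OF M1(4) M2(4)] symP])
  have wM: "wfl M" unfolding M_def using M1(1) M2(1) k by (auto simp: wfl_def scl_def)
  have nM: "\<forall>x\<in>set M. NC (fst (snd x)) (snd (snd x))"
    unfolding M_def using M1(2) M2(2) by (auto simp: scl_def)
  have uM: "(\<Union>x\<in>set M. snd (snd x)) = W \<union> W'"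
    unfolding M_def using M1(3) M2(3) by (auto simp: scl_def)
  show ?thesis unfolding NPC_def using wM nM uM eM by blast
qed



lemma subst_plus_var: "Z \<noteq> Y \<Longrightarrow> subst1 (Plus E (V Z)) Y G = Plus (subst1 E Y G) (V Z)"
  by (simp add: subst1_def)

lemma nc_rec:
  assumes "NC E W" "W \<noteq> {Y}"
  shows "NC (Rec Y E) (W - {Y})"
  using assms(1) unfolding NC_def
proof (elim disjE exE conjE)
  fix Z assume W: "W = {Z}" and h: "eqN E (Plus E (V Z))"
  have ZY: "Z \<noteq> Y" using W assms(2) by auto
  define G' where "G' = Rec Y (Plus E (V Z))"
  have "eqN G' (subst1 (Plus E (V Z)) Y G')" unfolding G'_def by (rule R1)
  then have "eqN G' (Plus (subst1 E Y G') (V Z))" by (simp only: subst_plus_var[OF ZY])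
  then have "eqN G' (Plus G' (V Z))" by (rule absorb_sum)
  moreover have "eqN G' (Rec Y E)" unfolding G'_def by (rule cong_rec[OF symN[OF h]])
  ultimately have "eqN (Rec Y E) (Plus (Rec Y E) (V Z))" by (rule absorb_cong[rotated])
  moreover have "W - {Y} = {Z}" using W ZY by auto
  ultimately show "(\<exists>Z. W - {Y} = {Z} \<and> eqN (Rec Y E) (Plus (Rec Y E) (V Z))) \<or>
    (\<exists>L. wfl L \<and> Zs L = W - {Y} \<and> eqN (Rec Y E) (Plus (Rec Y E) (Pre Tau (pb (map lf L)))))"
    by blast
next
  fix L assume wL: "wfl L" and ZL: "Zs L = W" and h: "eqN E (Plus E (Pre Tau (pb (map lf L))))"
  let ?P = "\<lambda>x. fst (snd x) \<noteq> Y"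
  define Lf where "Lf = filter ?P L"
  have ex: "\<exists>x\<in>set L. fst (snd x) \<noteq> Y"
  proof (rule ccontr)
    assume "\<not> ?thesis"
    then have "Zs L \<subseteq> {Y}" by (auto simp: Zs_def)
    moreover have "Zs L \<noteq> {}" using wL by (auto simp: Zs_def wfl_def)
    ultimately show False using ZL assms(2) by blast
  qed
  define A where "A = Pre Tau (pb (map lf L))"
  define B where "B = Pre Tau (pb (map lf Lf))"
  define G' where "G' = Rec Y (Plus (Plus A E) B)"
  define \<sigma> where "\<sigma> = V(Y := G')"
  define Lf' where "Lf' = map (\<lambda>(q,Z,E). (q, Z, substN \<sigma> E)) Lf"
  have "eqN (Rec Y E) (Rec Y (Plus A E))"
    unfolding A_def by (rule cong_rec[OF transN[OF h N1]])
  also have "eqN \<dots> (Rec Y (Plus (Plus A B) E))"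
    unfolding A_def B_def Lf_def by (rule r3_iter[OF wL ex])
  also have "eqN \<dots> G'"
  proof -
    have "eqN (Plus (Plus A B) E) (Plus A (Plus B E))" by (rule symN[OF N2])
    also have "eqN \<dots> (Plus A (Plus E B))" by (rule cong_plus[OF reflN N1])
    also have "eqN \<dots> (Plus (Plus A E) B)" by (rule N2)
    finally show ?thesis unfolding G'_def by (rule cong_rec)
  qed
  finally have GG: "eqN (Rec Y E) G'" .
  have nY: "\<forall>(q,Z,E)\<in>set Lf. Z \<noteq> Y" by (auto simp: Lf_def)
  have "eqN G' (subst1 (Plus (Plus A E) B) Y G')" unfolding G'_def by (rule R1)
  also have "subst1 (Plus (Plus A E) B) Y G' = Plus (subst1 (Plus A E) Y G') (Pre Tau (pb (map lf Lf')))"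
    using substP_leaves[OF nY, of G'] by (simp add: subst1_def B_def Lf'_def \<sigma>_def)
  finally have "eqN G' (Plus G' (Pre Tau (pb (map lf Lf'))))" by (rule absorb_sum)
  then have abs: "eqN (Rec Y E) (Plus (Rec Y E) (Pre Tau (pb (map lf Lf'))))"
    by (rule absorb_cong[OF symN[OF GG]])
  have wf: "wfl Lf'" using wL ex by (auto simp: wfl_def Lf'_def Lf_def filter_empty_conv)
  have zs: "Zs Lf' = W - {Y}" using ZL
    by (force simp: Zs_def Lf'_def Lf_def)
  show "(\<exists>Z. W - {Y} = {Z} \<and> eqN (Rec Y E) (Plus (Rec Y E) (V Z))) \<or>
    (\<exists>L. wfl L \<and> Zs L = W - {Y} \<and> eqN (Rec Y E) (Plus (Rec Y E) (Pre Tau (pb (map lf L)))))"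
    using wf zs abs by blast
qed



datatype ('a,'v) kel = KE (kp: real) (kE: "('a,'v) nexp") (kb: bool) (kE2: "('a,'v) nexp")
  (kL: "(real \<times> 'v \<times> ('a,'v) nexp) list")

definition good :: "('a,'v) kel \<Rightarrow> bool" where
  "good k \<longleftrightarrow> wfl (kL k) \<and>
     (kb k \<longrightarrow> eqN (Pre Tau (Dirac (kE k))) (Plus (kE2 k) (Pre Tau (pb (map lf (kL k)))))) \<and>
     (\<not> kb k \<longrightarrow> eqN (kE k) (Plus (kE2 k) (Pre Tau (pb (map lf (kL k))))))"

lemma nc_elem:
  assumes "NC E W"
  shows "\<exists>k. kE k = E \<and> kp k = p \<and> good k \<and> Zs (kL k) = W"
  using assms unfolding NC_def
proof (elim disjE exE conjE)
  fix Z assume W: "W = {Z}" and h: "eqN E (Plus E (V Z))"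
  define k where "k = KE p E True (Pre Tau (Dirac E)) [(1, Z, E)]"
  have "eqN (Plus (V Z) E) E" by (rule transN[OF N1 symN[OF h]])
  then have t: "eqN (Pre Tau (Dirac (Plus (V Z) E))) (Pre Tau (Dirac E))" by (rule cong_pre[OF cong_dirac])
  have "eqN (Pre Tau (Dirac E)) (Plus (Pre Tau (Dirac E)) (Pre Tau (Dirac E)))" by (rule symN[OF N3])
  also have "eqN \<dots> (Plus (Pre Tau (Dirac E)) (Pre Tau (Dirac (Plus (V Z) E))))"
    by (rule cong_plus[OF reflN symN[OF t]])
  finally have g: "good k" unfolding good_def k_def by (simp add: wfl_def)
  have z: "Zs (kL k) = W" using W by (simp add: k_def Zs_def)
  have "kE k = E" "kp k = p" by (simp_all add: k_def)
  then show ?thesis using g z by blast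
next
  fix L assume wL: "wfl L" and ZL: "Zs L = W" and h: "eqN E (Plus E (Pre Tau (pb (map lf L))))"
  define k where "k = KE p E False E L"
  have g: "good k" unfolding good_def k_def using wL h by simp
  have "kE k = E" "kp k = p" "Zs (kL k) = W" using ZL by (simp_all add: k_def)
  then show ?thesis using g by blast
qed

lemma choose_K:
  assumes "\<forall>x\<in>set M. NC (fst (snd x)) (snd (snd x))"
  shows "\<exists>K. map (\<lambda>k. (kp k, kE k)) K = map (\<lambda>x. (fst x, fst (snd x))) M \<and> (\<forall>k\<in>set K. good k) \<and>
     (\<Union>k\<in>set K. Zs (kL k)) = (\<Union>x\<in>set M. snd (snd x))"
  using assms
proof (induction M)
  case Nil then show ?case by simp
next
  case (Cons x M)
  obtain K where K: "map (\<lambda>k. (kp k, kE k)) K = map (\<lambda>x. (fst x, fst (snd x))) M" "\<forall>k\<in>set K. good k"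
     "(\<Union>k\<in>set K. Zs (kL k)) = (\<Union>x\<in>set M. snd (snd x))" using Cons by auto
  obtain k where k: "kE k = fst (snd x)" "kp k = fst x" "good k" "Zs (kL k) = snd (snd x)"
    using nc_elem[of "fst (snd x)" "snd (snd x)" "fst x"] Cons.prems by auto
  show ?case using K k by (intro exI[of _ "k # K"]) auto
qed

lemma sum_list_pos_gen: "K \<noteq> [] \<Longrightarrow> \<forall>k\<in>set K. 0 < (w k::real) \<Longrightarrow> 0 < sum_list (map w K)"
proof (induction K)
  case Nil then show ?case by simp
next
  case (Cons a K) then show ?case by (cases "K = []") (auto intro: add_pos_pos)
qed

lemma distr_norm:
  assumes "K \<noteq> []" "\<forall>k\<in>set K. 0 < w k"
  shows "distr (map (\<lambda>k. (1 / sum_list (map w K)) * w k) K)"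
proof -
  have s: "0 < sum_list (map w K)" using assms sum_list_pos_gen by blast
  have "sum_list (map (\<lambda>k. (1 / sum_list (map w K)) * w k) K) = (1 / sum_list (map w K)) * sum_list (map w K)"
    by (rule sum_list_const_mult)
  also have "\<dots> = 1" using s by simp
  finally show ?thesis unfolding distr_def using assms s by (auto simp: o_def)
qed



lemma Zs_scl[simp]: "Zs (scl c L) = Zs L"
  by (force simp: Zs_def scl_def)

lemma Zs_concat: "Zs (concat Ls) = (\<Union>L\<in>set Ls. Zs L)"
  by (auto simp: Zs_def)

lemma nc_tau:
  assumes "NPC P W"
  shows "NC (Pre Tau P) W"
proof -
  obtain M where wM: "wfl M" and nM: "\<forall>x\<in>set M. NC (fst (snd x)) (snd (snd x))"
    and uM: "(\<Union>x\<in>set M. snd (snd x)) = W" and eM: "eqP P (pb (map (\<lambda>x. (fst x, Dirac (fst (snd x)))) M))"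
    using assms unfolding NPC_def by blast
  obtain K where mK: "map (\<lambda>k. (kp k, kE k)) K = map (\<lambda>x. (fst x, fst (snd x))) M"
    and gK: "\<forall>k\<in>set K. good k" and uK: "(\<Union>k\<in>set K. Zs (kL k)) = (\<Union>x\<in>set M. snd (snd x))"
    using choose_K[OF nM] by blast
  have Kne: "K \<noteq> []" using mK wM by (auto simp: wfl_def)
  have kpos: "\<forall>k\<in>set K. 0 < kp k"
  proof
    fix k assume "k \<in> set K"
    then have "(kp k, kE k) \<in> set (map (\<lambda>x. (fst x, fst (snd x))) M)"
      using mK[symmetric] by (metis (no_types, lifting) image_eqI list.set_map)
    then show "0 < kp k" using wM by (auto simp: wfl_def)
  qed
  have gk: "\<And>k. k \<in> set K \<Longrightarrow> wfl (kL k)" using gK by (simp add: good_def)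
  have e0: "map (\<lambda>x. (fst x, Dirac (fst (snd x)))) M = map (\<lambda>k. (kp k, Dirac (kE k))) K"
    using arg_cong[OF mK, of "map (\<lambda>(a,b). (a, Dirac b))"] by (simp add: o_def)
  define l1 where "l1 = map (\<lambda>k. (kp k, Dirac (Plus (kE2 k) (Pre Tau (pb (map lf (kL k))))))) K"
  define l2 where "l2 = map (\<lambda>k. (kp k, pb (map lf (kL k)))) K"
  define A where "A = Pre Tau (pb l1)"
  have wl: "wfl (map (\<lambda>k. (kp k, kE k, kb k)) K)" using Kne kpos by (auto simp: wfl_def)
  have "eqN (Pre Tau P) (Pre Tau (pb (map (\<lambda>k. (kp k, Dirac (kE k))) K)))"
    using cong_pre[OF eM] e0 by simp
  also have "eqN \<dots> (Pre Tau (pb (map (\<lambda>k. (kp k, Dirac (if kb k then Pre Tau (Dirac (kE k)) else kE k))) K)))"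
    using leaf_tau[OF wl, of Tau] by (simp add: o_def)
  also have "eqN \<dots> A"
  proof -
    have "\<forall>k\<in>set K. eqP (Dirac (if kb k then Pre Tau (Dirac (kE k)) else kE k))
                       (Dirac (Plus (kE2 k) (Pre Tau (pb (map lf (kL k))))))"
      using gK by (auto simp: good_def intro: cong_dirac)
    then show ?thesis unfolding A_def l1_def by (rule cong_pre[OF pb_cong])
  qed
  finally have PA: "eqN (Pre Tau P) A" .
  define s where "s = sum_list (map kp K)"
  define xs where "xs = map (\<lambda>k. ((1/s) * kp k, kE2 k, pb (map lf (kL k)))) K"
  have dx: "distr (map fst xs)" using distr_norm[OF Kne kpos] by (simp add: xs_def s_def o_def)
  have T: "eqN (Plus (Pre Tau (pbig (map (\<lambda>(p, E, P). (p, Dirac (Plus E (Pre Tau P)))) xs)))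
                (Pre Tau (pbig (map (\<lambda>(p, E, P). (p, P)) xs))))
           (Pre Tau (pbig (map (\<lambda>(p, E, P). (p, Dirac (Plus E (Pre Tau P)))) xs)))"
    by (rule T3[OF dx])
  have wl1: "wfl l1" "wfl l2" using Kne kpos by (auto simp: wfl_def l1_def l2_def)
  have sl: "sum_list (map fst l1) = s" "sum_list (map fst l2) = s" by (simp_all add: l1_def l2_def s_def o_def)
  have b1: "pbig (map (\<lambda>(p, E, P). (p, Dirac (Plus E (Pre Tau P)))) xs) = pb l1"
  proof -
    have "map (\<lambda>(p, E, P). (p, Dirac (Plus E (Pre Tau P)))) xs = map (\<lambda>(p,P). ((1 / sum_list (map fst l1)) * p, P)) l1"
      unfolding sl by (simp add: xs_def l1_def)
    then show ?thesis using pbig_pb[OF wl1(1)] by simp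
  qed
  have b2: "pbig (map (\<lambda>(p, E, P). (p, P)) xs) = pb l2"
  proof -
    have "map (\<lambda>(p, E, P). (p, P)) xs = map (\<lambda>(p,P). ((1 / sum_list (map fst l2)) * p, P)) l2"
      unfolding sl by (simp add: xs_def l2_def)
    then show ?thesis using pbig_pb[OF wl1(2)] by simp
  qed
  have TA: "eqN (Plus A (Pre Tau (pb l2))) A" using T unfolding b1 b2 A_def .
  define Lnew where "Lnew = concat (map (\<lambda>k. scl (kp k / sum_list (map fst (kL k))) (kL k)) K)"
  have fl: "eqP (pb l2) (pb (concat (map (\<lambda>k. scl (kp k / sum_list (map fst (map lf (kL k)))) (map lf (kL k))) K)))"
    unfolding l2_def by (rule pb_flatten) (use Kne kpos gk in \<open>auto simp: wfl_map_lf\<close>)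
  have cc: "concat (map (\<lambda>k. scl (kp k / sum_list (map fst (map lf (kL k)))) (map lf (kL k))) K) = map lf Lnew"
    unfolding Lnew_def by (simp add: map_concat map_lf_scl[symmetric] del: sum_map_lf) (simp add: o_def)
  have fl2: "eqP (pb (map lf Lnew)) (pb l2)" using symP[OF fl] unfolding cc .
  have "eqN (Plus (Pre Tau P) (Pre Tau (pb (map lf Lnew)))) (Plus A (Pre Tau (pb l2)))"
    by (rule cong_plus[OF PA cong_pre[OF fl2]])
  also note TA
  also note symN[OF PA]
  finally have fin: "eqN (Pre Tau P) (Plus (Pre Tau P) (Pre Tau (pb (map lf Lnew))))" by (rule symN)
  have wn: "wfl Lnew"
  proof -
    obtain k0 K' where K: "K = k0 # K'" using Kne by (cases K) auto
    have "kL k0 \<noteq> []" using gk K by (auto simp: wfl_def)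
    then have ne: "Lnew \<noteq> []" by (simp add: Lnew_def K scl_def)
    have "\<forall>x\<in>set Lnew. 0 < fst x"
    proof
      fix x assume "x \<in> set Lnew"
      then obtain k where k: "k \<in> set K" "x \<in> set (scl (kp k / sum_list (map fst (kL k))) (kL k))"
        by (auto simp: Lnew_def)
      obtain a b where xab: "x = (a,b)" by (cases x)
      obtain p where p: "a = (kp k / sum_list (map fst (kL k))) * p" "(p,b) \<in> set (kL k)"
        using set_scl[of a b] k(2) xab by blast
      have "0 < p" using gk[OF k(1)] p(2) by (auto simp: wfl_def)
      moreover have "0 < kp k / sum_list (map fst (kL k))" using kpos k(1) sum_pos[OF gk[OF k(1)]] by simp
      ultimately have "0 < (kp k / sum_list (map fst (kL k))) * p" by (metis mult_pos_pos)
      then show "0 < fst x" using xab p(1) by simp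
    qed
    then show ?thesis using ne by (simp add: wfl_def)
  qed
  have zn: "Zs Lnew = W" unfolding Lnew_def Zs_concat using uK uM by simp
  show ?thesis unfolding NC_def using wn zn fin by blast
qed



lemma nc_all:
  fixes E :: "('a,'v) nexp" and P :: "('a,'v) pexp"
  shows "ungN E W \<Longrightarrow> NC E W" "ungP P W' \<Longrightarrow> NPC P W'"
  by (induction E W and P W' rule: ungN_ungP.inducts)
     (auto intro: nc_var nc_tau nc_rec nc_plusL nc_plusR npc_dirac npc_pplus)

theorem mainTheorem8:
  fixes E :: "('a, 'v::infinite) nexp" and X :: 'v
  assumes "ungN E {X}"
  shows "eqN E (Plus E (V X))"
proof -
  have "NC E {X}" using nc_all(1)[OF assms] .
  then show ?thesis unfolding NC_def
  proof (elim disjE exE conjE)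
    fix Z assume "{X} = {Z}" "eqN E (Plus E (V Z))"
    then show ?thesis by auto
  next
    fix L assume wL: "wfl L" and ZL: "Zs L = {X}" and h: "eqN E (Plus E (Pre Tau (pb (map lf L))))"
    have allX: "\<forall>x\<in>set L. fst (snd x) = X" using ZL by (auto simp: Zs_def)
    define l3 where "l3 = map (\<lambda>x. (fst x, Dirac (Plus (snd (snd x)) (V X)))) L"
    have "map lf L = map (\<lambda>x. (fst x, Dirac (Plus (V (fst (snd x))) (snd (snd x))))) L"
      by (auto simp: lf_def split: prod.splits)
    also have "\<dots> = map (\<lambda>x. (fst x, Dirac (Plus (V X) (snd (snd x))))) L"
      using allX by auto
    finally have ml: "map lf L = map (\<lambda>x. (fst x, Dirac (Plus (V X) (snd (snd x))))) L" .
    have e1: "eqP (pb (map lf L)) (pb l3)" unfolding ml l3_def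
      by (rule pb_cong) (auto intro: cong_dirac N1)
    have wl3: "wfl l3" using wL by (auto simp: wfl_def l3_def)
    have kpos: "\<forall>x\<in>set L. 0 < fst x" using wL by (auto simp: wfl_def)
    have Lne: "L \<noteq> []" using wL by (auto simp: wfl_def)
    define s where "s = sum_list (map fst L)"
    define xs where "xs = map (\<lambda>x. ((1/s) * fst x, snd (snd x))) L"
    have dx: "distr (map fst xs)" using distr_norm[OF Lne kpos] by (simp add: xs_def s_def o_def)
    have sl: "sum_list (map fst l3) = s" by (simp add: l3_def s_def o_def)
    have b: "pbig (map (\<lambda>(p, E). (p, Dirac (Plus E (V X)))) xs) = pb l3"
    proof -
      have "map (\<lambda>(p, E). (p, Dirac (Plus E (V X)))) xs = map (\<lambda>(p,P). ((1 / sum_list (map fst l3)) * p, P)) l3"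
        unfolding sl by (simp add: xs_def l3_def)
      then show ?thesis using pbig_pb[OF wl3] by simp
    qed
    have T: "eqN (Plus (Pre Tau (pb l3)) (V X)) (Pre Tau (pb l3))"
      using T2[OF dx, of "V X"] unfolding b .
    have "eqN (Plus (Pre Tau (pb (map lf L))) (V X)) (Plus (Pre Tau (pb l3)) (V X))"
      by (rule cong_plus[OF cong_pre[OF e1] reflN])
    also note T
    also have "eqN (Pre Tau (pb l3)) (Pre Tau (pb (map lf L)))" by (rule cong_pre[OF symP[OF e1]])
    finally have "eqN (Plus (Pre Tau (pb (map lf L))) (V X)) (Pre Tau (pb (map lf L)))" .
    then show ?thesis by (rule absorb_trans[OF h])
  qed
qed


end
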